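(* Let $n \geqslant 2$ and let $p \geqslant 2$ be an integer. For any $\varepsilon_1, \varepsilon_2 \in [0,1]$ with $\varepsilon_1 > \varepsilon_2$, we have $\mathcal X(\varepsilon_1, p) \subset \mathcal X(\varepsilon_2, p)$ (proper inclusion).
   Context: For $\bm x \in \mathbb{R}^n_{\geqslant 0}$ and $p \geqslant 1$, $\|\bm x\|_p = (\sum_{i=1}^n x_i^p)^{1/p}$. Define $D_p = n^{1-1/p} - 1$. For an integer $p\geqslant 2$ and $\varepsilon \in [0,1]$, define $\mathcal X(\varepsilon,p) = \{\bm x \in \mathbb{R}^n_{\geqslant 0} : (1+\varepsilon D_p)\|\bm x\|_p \leqslant \|\bm x\|_1\}$ (the set of "at least $(\varepsilon,p)$-fair" vectors). *)

theory Defs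
  imports "HOL-Analysis.Analysis"
begin

definition pnorm :: "nat \<Rightarrow> real^'n::finite \<Rightarrow> real" where
  "pnorm p x = (\<Sum>i\<in>UNIV. \<bar>x $ i\<bar> ^ p) powr (1 / real p)"

definition Dp :: "'n::finite itself \<Rightarrow> nat \<Rightarrow> real" where
  "Dp _ p = real CARD('n) powr (1 - 1 / real p) - 1"

definition fair_set :: "real \<Rightarrow> nat \<Rightarrow> (real^'n::finite) set" where
  "fair_set \<epsilon> p = {x. (\<forall>i. 0 \<le> x $ i) \<and>
      (1 + \<epsilon> * Dp TYPE('n) p) * pnorm p x \<le> pnorm 1 x}"

end

theory Submission
  imports Defs
begin

lemma vec_sums:
  fixes t :: real and i0 :: "'n::finite" and q :: nat
  assumes "0 \<le> t"
  shows "(\<Sum>i\<in>UNIV. \<bar>(\<chi> i. if i = i0 then 1 else t :: real^'n) $ i\<bar> ^ q)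
         = 1 + (real CARD('n) - 1) * t ^ q"
proof -
  have "(\<Sum>i\<in>UNIV. \<bar>(\<chi> i. if i = i0 then 1 else t :: real^'n) $ i\<bar> ^ q)
      = (\<Sum>i\<in>UNIV. if i = i0 then 1 else t ^ q)"
    using assms by (intro sum.cong) auto
  also have "\<dots> = 1 + (\<Sum>i\<in>UNIV - {i0}. t ^ q)"
    by (subst sum.remove[of UNIV i0]) auto
  also have "\<dots> = 1 + (real CARD('n) - 1) * t ^ q"
    by (simp add: card_Diff_singleton of_nat_diff)
  finally show ?thesis .
qed

theorem proposition1:
  fixes \<epsilon>1 \<epsilon>2 :: real and p :: nat
  assumes "CARD('n::finite) \<ge> 2"
    and "p \<ge> 2"
    and "0 \<le> \<epsilon>1" and "\<epsilon>1 \<le> 1"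
    and "0 \<le> \<epsilon>2" and "\<epsilon>2 \<le> 1"
    and "\<epsilon>1 > \<epsilon>2"
  shows "(fair_set \<epsilon>1 p :: (real^'n) set) \<subset> fair_set \<epsilon>2 p"
proof -
  define N where "N = real CARD('n)"
  define D where "D = Dp TYPE('n) p"
  have N2: "N \<ge> 2" using assms(1) by (simp add: N_def)
  have p0: "real p > 0" using assms(2) by simp
  have De: "D = N powr (1 - 1 / real p) - 1" by (simp add: D_def Dp_def N_def)
  have e: "1 - 1 / real p > 0" using assms(2) by (simp add: field_simps)
  have Dpos: "D > 0" unfolding De using N2 e by (simp add: gr_one_powr)
  have pn0: "pnorm p x \<ge> 0" for x :: "real^'n" by (simp add: pnorm_def)
  have sub: "(fair_set \<epsilon>1 p :: (real^'n) set) \<subseteq> fair_set \<epsilon>2 p"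
  proof
    fix x :: "real^'n" assume "x \<in> fair_set \<epsilon>1 p"
    then have x: "\<forall>i. 0 \<le> x $ i" "(1 + \<epsilon>1 * D) * pnorm p x \<le> pnorm 1 x"
      by (auto simp: fair_set_def D_def)
    have "(1 + \<epsilon>2 * D) * pnorm p x \<le> (1 + \<epsilon>1 * D) * pnorm p x"
      using pn0[of x] Dpos assms(7) by (intro mult_right_mono) auto
    with x show "x \<in> fair_set \<epsilon>2 p" by (auto simp: fair_set_def D_def)
  qed
  define c where "c = 1 + \<epsilon>2 * D"
  obtain i0 :: 'n where True by simp
  define v where "v t = (\<chi> i. if i = i0 then 1 else t :: real^'n)" for t
  define g where "g t = (1 + (N - 1) * t) - c * (1 + (N - 1) * t ^ p) powr (1 / real p)" for t :: real
  have pv: "pnorm p (v t) = (1 + (N - 1) * t ^ p) powr (1 / real p)" if "0 \<le> t" for t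
    using vec_sums[OF that, of i0 p] unfolding pnorm_def v_def N_def by simp
  have p1: "pnorm 1 (v t) = 1 + (N - 1) * t" if "0 \<le> t" for t
    using vec_sums[OF that, of i0 1] N2 that unfolding pnorm_def v_def N_def by simp
  have z: "(0::real) ^ p = 0" using assms(2) by simp
  have "g 0 = - (\<epsilon>2 * D)" unfolding g_def c_def z by simp
  then have g0: "g 0 \<le> 0" using assms(5) Dpos by simp
  have "\<epsilon>2 * D \<le> D" using assms(6) Dpos by (simp add: mult_left_le_one_le)
  then have "c \<le> N powr (1 - 1 / real p)" unfolding c_def using De by linarith
  then have "c * N powr (1 / real p) \<le> N powr (1 - 1 / real p) * N powr (1 / real p)"
    by (intro mult_right_mono) auto
  also have "\<dots> = N" using N2 by (simp add: powr_add[symmetric])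
  finally have g1: "g 1 \<ge> 0" by (simp add: g_def)
  have cont: "isCont g t" if "0 \<le> t" for t
  proof -
    have "1 + (N - 1) * t ^ p > 0" using N2 that by (smt (verit) zero_le_mult_iff zero_le_power)
    then show ?thesis unfolding g_def by (intro continuous_intros) auto
  qed
  obtain t where t: "0 \<le> t" "t \<le> 1" "g t = 0"
    using IVT[of g 0 0 1] g0 g1 cont by auto
  have vin: "v t \<in> fair_set \<epsilon>2 p"
    using t pv p1 by (simp add: fair_set_def v_def D_def[symmetric] g_def c_def)
  have pos: "pnorm p (v t) > 0" using pv[OF t(1)] N2 t(1)
    by (smt (verit) powr_gt_zero zero_le_mult_iff zero_le_power)
  have "(1 + \<epsilon>2 * D) * pnorm p (v t) < (1 + \<epsilon>1 * D) * pnorm p (v t)"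
    using pos Dpos assms(7) by (intro mult_strict_right_mono) auto
  then have vout: "v t \<notin> fair_set \<epsilon>1 p"
    using t pv p1 by (simp add: fair_set_def D_def[symmetric] g_def c_def)
  show ?thesis using sub vin vout by blast
qed

end
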